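(* For $3\le n\le m$ and $2\le 2r<n$, there exists a set $S\subset\mathrm{GF}(q^m)^n$ with rank diameter $2r$ such that $|S|>V_r(q^m,n)$.
   Context: The rank $\mathrm{rk}(\mathbf x)$ of $\mathbf x\in\mathrm{GF}(q^m)^n$ is the maximum number of its coordinates linearly independent over $\mathrm{GF}(q)$, and $d_{\mathrm R}(\mathbf x,\mathbf y)=\mathrm{rk}(\mathbf x-\mathbf y)$. The diameter of a set is the maximum rank distance between two of its elements. $V_r(q^m,n)$ is the number of vectors of $\mathrm{GF}(q^m)^n$ within rank distance $r$ of a fixed vector, i.e. $V_r(q^m,n)=\sum_{u=0}^r {n\brack u}\alpha(m,u)$ with $\alpha(m,0)=1$, $\alpha(m,u)=\prod_{i=0}^{u-1}(q^m-q^i)$ and ${n\brack u}=\alpha(n,u)/\alpha(u,u)$ the Gaussian binomial. *)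

theory Defs
  imports Main
begin

text \<open>K is a subfield of the (finite) field type 'a; it plays the role of GF(q),
  while the whole type 'a plays the role of GF(q^m).\<close>
definition subfield :: "'a::field set \<Rightarrow> bool" where
  "subfield K \<longleftrightarrow> 0 \<in> K \<and> 1 \<in> K \<and>
     (\<forall>a\<in>K. \<forall>b\<in>K. a + b \<in> K \<and> a * b \<in> K) \<and>
     (\<forall>a\<in>K. - a \<in> K \<and> inverse a \<in> K)"

definition vecs :: "nat \<Rightarrow> (nat \<Rightarrow> 'a::zero) set" where
  "vecs n = {x. \<forall>i. n \<le> i \<longrightarrow> x i = 0}"

definition lin_indep_over :: "'a::field set \<Rightarrow> (nat \<Rightarrow> 'a) \<Rightarrow> nat set \<Rightarrow> bool" where
  "lin_indep_over K x I \<longleftrightarrow>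
     (\<forall>c. (\<forall>i\<in>I. c i \<in> K) \<and> (\<Sum>i\<in>I. c i * x i) = 0 \<longrightarrow> (\<forall>i\<in>I. c i = 0))"

definition rk :: "'a::field set \<Rightarrow> nat \<Rightarrow> (nat \<Rightarrow> 'a) \<Rightarrow> nat" where
  "rk K n x = Max {card I | I. I \<subseteq> {..<n} \<and> lin_indep_over K x I}"

definition rank_dist :: "'a::field set \<Rightarrow> nat \<Rightarrow> (nat \<Rightarrow> 'a) \<Rightarrow> (nat \<Rightarrow> 'a) \<Rightarrow> nat" where
  "rank_dist K n x y = rk K n (\<lambda>i. x i - y i)"

definition rank_diameter :: "'a::field set \<Rightarrow> nat \<Rightarrow> (nat \<Rightarrow> 'a) set \<Rightarrow> nat" where
  "rank_diameter K n S = Max {rank_dist K n x y | x y. x \<in> S \<and> y \<in> S}"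

definition alpha :: "nat \<Rightarrow> nat \<Rightarrow> nat \<Rightarrow> nat" where
  "alpha q m u = (\<Prod>i<u. (q ^ m - q ^ i))"

definition gauss_binom :: "nat \<Rightarrow> nat \<Rightarrow> nat \<Rightarrow> nat" where
  "gauss_binom q n u = alpha q n u div alpha q u u"

definition ball_vol :: "nat \<Rightarrow> nat \<Rightarrow> nat \<Rightarrow> nat \<Rightarrow> nat" where
  "ball_vol q m n r = (\<Sum>u\<le>r. gauss_binom q n u * alpha q m u)"

end

theory Submission
  imports Defs "HOL-Library.FuncSet"
begin


lemma rk_set_finite: "finite {card I | I. I \<subseteq> {..<n} \<and> lin_indep_over K x I}"
proof -
  have "{card I | I. I \<subseteq> {..<n} \<and> lin_indep_over K x I} \<subseteq> card ` Pow {..<n}" by blast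
  thus ?thesis by (rule finite_subset) simp
qed

lemma rk_set_ne: "0 \<in> {card I | I. I \<subseteq> {..<n} \<and> lin_indep_over K x I}"
  unfolding lin_indep_over_def by (rule CollectI, rule exI[of _ "{}"]) simp

lemma rk_ge: "I \<subseteq> {..<n} \<Longrightarrow> lin_indep_over K x I \<Longrightarrow> card I \<le> rk K n x"
  unfolding rk_def by (rule Max_ge[OF rk_set_finite]) blast

lemma indep_nonzero:
  assumes K: "subfield K" and fin: "finite I" and I: "lin_indep_over K x I" and i: "i \<in> I"
  shows "x i \<noteq> 0"
proof
  assume xi: "x i = 0"
  define c where "c = (\<lambda>j. if j = i then (1::'a) else 0)"
  have s: "(\<Sum>j\<in>I. c j * x j) = 0" by (rule sum.neutral) (auto simp: c_def xi)
  have cK: "\<forall>j\<in>I. c j \<in> K" using K unfolding subfield_def c_def by simp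
  have imp: "(\<forall>j\<in>I. c j \<in> K) \<and> (\<Sum>j\<in>I. c j * x j) = 0 \<longrightarrow> (\<forall>j\<in>I. c j = 0)"
    using I unfolding lin_indep_over_def by (rule spec)
  have "\<forall>j\<in>I. c j = 0" by (rule mp[OF imp]) (rule conjI[OF cK s])
  hence "c i = 0" using i by (rule bspec)
  thus False unfolding c_def by simp
qed

lemma rk_le:
  assumes K: "subfield K" and x: "\<forall>i. k \<le> i \<longrightarrow> x i = 0"
  shows "rk K n x \<le> k"
  unfolding rk_def
proof (rule Max.boundedI[OF rk_set_finite])
  show "{card I | I. I \<subseteq> {..<n} \<and> lin_indep_over K x I} \<noteq> {}"
    using rk_set_ne by (rule ex_in_conv[THEN iffD1, OF exI])
next
  fix a assume "a \<in> {card I | I. I \<subseteq> {..<n} \<and> lin_indep_over K x I}"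
  hence "\<exists>I. a = card I \<and> I \<subseteq> {..<n} \<and> lin_indep_over K x I" by (simp only: mem_Collect_eq)
  then obtain I where a: "a = card I" and I: "I \<subseteq> {..<n}" "lin_indep_over K x I" by (elim exE conjE)
  have fin: "finite I" by (rule finite_subset[OF I(1)]) simp
  have "I \<subseteq> {..<k}"
  proof
    fix i assume i: "i \<in> I"
    have "x i \<noteq> 0" by (rule indep_nonzero[OF K fin I(2) i])
    thus "i \<in> {..<k}" using x by (metis lessThan_iff not_le)
  qed
  thus "a \<le> k" unfolding a using card_mono[of "{..<k}" I] by simp
qed

lemma card_S:
  assumes "finite (UNIV :: 'a set)"
  shows "card {x::nat\<Rightarrow>'a::zero. \<forall>i. k \<le> i \<longrightarrow> x i = 0} = card (UNIV::'a set) ^ k"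
proof -
  let ?f = "\<lambda>f i. if i < k then f i else (0::'a)"
  have eq: "{x::nat\<Rightarrow>'a. \<forall>i. k \<le> i \<longrightarrow> x i = 0} = ?f ` (PiE {..<k} (\<lambda>_. UNIV))"
  proof (rule set_eqI, rule iffI)
    fix x :: "nat \<Rightarrow> 'a" assume "x \<in> {x. \<forall>i. k \<le> i \<longrightarrow> x i = 0}"
    hence "x = ?f (restrict x {..<k})" by (auto simp: fun_eq_iff)
    moreover have "restrict x {..<k} \<in> PiE {..<k} (\<lambda>_. UNIV)" by simp
    ultimately show "x \<in> ?f ` (PiE {..<k} (\<lambda>_. UNIV))" by blast
  next
    fix x :: "nat \<Rightarrow> 'a" assume "x \<in> ?f ` (PiE {..<k} (\<lambda>_. UNIV))"
    then obtain f where "x = ?f f" by blast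
    thus "x \<in> {x. \<forall>i. k \<le> i \<longrightarrow> x i = 0}" by simp
  qed
  have inj: "inj_on ?f (PiE {..<k} (\<lambda>_. UNIV))"
  proof (rule inj_onI)
    fix f g assume f: "f \<in> PiE {..<k} (\<lambda>_. (UNIV::'a set))" and g: "g \<in> PiE {..<k} (\<lambda>_. (UNIV::'a set))"
      and e: "?f f = ?f g"
    show "f = g"
    proof
      fix i show "f i = g i"
      proof (cases "i < k")
        case True thus ?thesis using fun_cong[OF e, of i] by simp
      next
        case False
        hence "i \<notin> {..<k}" by simp
        thus ?thesis using PiE_arb[OF f] PiE_arb[OF g] by simp
      qed
    qed
  qed
  show ?thesis unfolding eq card_image[OF inj] by (simp add: card_PiE)
qed



lemma exists_indep:
  fixes K :: "'a::field set"
  assumes fin: "finite (UNIV :: 'a set)" and K: "subfield K" and cK: "card K = q"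
    and cU: "card (UNIV :: 'a set) = q ^ m" and q2: "2 \<le> q"
  shows "k \<le> m \<Longrightarrow> \<exists>e. lin_indep_over K e {..<k}"
proof (induction k)
  case 0 show ?case unfolding lin_indep_over_def by simp
next
  case (Suc k)
  then obtain e where e: "lin_indep_over K e {..<k}" by auto
  have km: "k < m" using Suc.prems by simp
  let ?Sp = "(\<lambda>c. \<Sum>i<k. c i * e i) ` (PiE {..<k} (\<lambda>_. K))"
  have "card ?Sp \<le> card (PiE {..<k} (\<lambda>_. K))" by (rule card_image_le) (simp add: finite_PiE finite_subset[OF _ fin])
  also have "\<dots> = q ^ k" by (simp add: card_PiE cK)
  also have "\<dots> < q ^ m" using km q2 by (simp add: power_strict_increasing)
  finally have "card ?Sp < card (UNIV::'a set)" using cU by simp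
  hence "?Sp \<noteq> UNIV" by auto
  then obtain v where v: "v \<notin> ?Sp" by blast
  let ?e = "e(k := v)"
  have "lin_indep_over K ?e {..<Suc k}"
    unfolding lin_indep_over_def
  proof (intro allI impI)
    fix c assume c: "(\<forall>i\<in>{..<Suc k}. c i \<in> K) \<and> (\<Sum>i\<in>{..<Suc k}. c i * ?e i) = 0"
    have sum_eq: "(\<Sum>i\<in>{..<Suc k}. c i * ?e i) = (\<Sum>i<k. c i * e i) + c k * v"
      by (simp add: lessThan_Suc sum.insert)
    have s0: "(\<Sum>i<k. c i * e i) + c k * v = 0" using c sum_eq by simp
    have ck: "c k = 0"
    proof (rule ccontr)
      assume nz: "c k \<noteq> 0"
      let ?d = "restrict (\<lambda>i. - inverse (c k) * c i) {..<k}"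
      have dK: "?d \<in> PiE {..<k} (\<lambda>_. K)"
        using c K unfolding subfield_def by auto
      have "v = - inverse (c k) * (\<Sum>i<k. c i * e i)"
        using s0 nz by (simp add: eq_neg_iff_add_eq_0[symmetric] field_simps)
      also have "\<dots> = (\<Sum>i<k. ?d i * e i)" by (simp add: sum_distrib_left mult.assoc)
      finally have "v \<in> ?Sp" using dK by blast
      thus False using v by simp
    qed
    have "(\<Sum>i<k. c i * e i) = 0" using s0 ck by simp
    hence "\<forall>i\<in>{..<k}. c i = 0" using e c unfolding lin_indep_over_def by auto
    thus "\<forall>i\<in>{..<Suc k}. c i = 0" using ck by (auto simp: less_Suc_eq)
  qed
  thus ?case by blast
qed



lemma alpha_uu_ge: "2 \<le> q \<Longrightarrow> q^(u*(u-1)) \<le> alpha q u u"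
proof -
  assume q: "2 \<le> q"
  have "(\<Prod>i<u. q^(u-1)) = q^((u-1)*u)" by (simp add: power_mult)
  hence "q^(u*(u-1)) = (\<Prod>i<u. q^(u-1))" by (simp add: mult.commute)
  also have "\<dots> \<le> (\<Prod>i<u. q^u - q^i)"
  proof (rule prod_mono, safe)
    fix i assume i: "i < u"
    have "q^i \<le> q^(u-1)" using i q by (intro power_increasing) auto
    moreover have "q^u = q * q^(u-1)" using i by (metis Suc_diff_1 gr_implies_not0 neq0_conv power_Suc)
    moreover have "q * q^(u-1) \<ge> 2 * q^(u-1)" using q by simp
    ultimately show "q^(u-1) \<le> q^u - q^i" by linarith
  qed
  finally show ?thesis unfolding alpha_def .
qed

lemma alpha_le: "alpha q m u \<le> q^(m*u)"
proof -
  have "alpha q m u \<le> (\<Prod>i<u. q^m)" unfolding alpha_def by (rule prod_mono) auto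
  thus ?thesis by (simp add: power_mult)
qed

lemma term_le:
  assumes q: "2 \<le> q" and u: "u \<le> n" and nm: "n \<le> m"
  shows "gauss_binom q n u * alpha q m u \<le> q^(2*m*u - u*(u-1))"
proof -
  have qpos: "0 < q^(u*(u-1))" using q by simp
  have e1: "u*(u-1) \<le> n*u" using u by (simp add: mult.commute mult_le_mono)
  have e2: "n*u \<le> m*u" using nm by simp
  have "gauss_binom q n u \<le> alpha q n u div q^(u*(u-1))"
    unfolding gauss_binom_def by (rule div_le_mono2[OF qpos alpha_uu_ge[OF q]])
  also have "\<dots> \<le> q^(n*u) div q^(u*(u-1))" by (rule div_le_mono[OF alpha_le])
  also have "\<dots> = q^(n*u - u*(u-1))" using q e1 by (simp add: power_diff)
  finally have g: "gauss_binom q n u \<le> q^(n*u - u*(u-1))" .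
  have "gauss_binom q n u * alpha q m u \<le> q^(n*u - u*(u-1)) * q^(m*u)"
    by (rule mult_le_mono[OF g alpha_le])
  also have "\<dots> = q^(n*u - u*(u-1) + m*u)" by (simp add: power_add)
  also have "\<dots> \<le> q^(2*m*u - u*(u-1))"
  proof (rule power_increasing)
    have "2*m*u = m*u + m*u" by simp
    thus "n*u - u*(u-1) + m*u \<le> 2*m*u - u*(u-1)" using e1 e2 by linarith
  qed (use q in auto)
  finally show ?thesis .
qed

lemma g_step: "Suc r \<le> m \<Longrightarrow> 2*m*r - r*(r-1) + 1 \<le> 2*m*Suc r - Suc r*(Suc r-1)"
proof -
  assume a: "Suc r \<le> m"
  have h1: "r*(r-1) \<le> 2*m*r" using a by (metis le_Suc_eq diff_le_self le_trans mult_le_mono mult.commute mult_2 le_add2 Suc_leD)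
  have h2: "Suc r * r \<le> 2*m*Suc r" using a by (metis mult.commute mult_le_mono le_add2 mult_2 le_trans Suc_leD le_refl)
  have x1: "Suc r*(Suc r - 1) = r*(r-1) + 2*r" by (cases r) (simp_all add: algebra_simps)
  have x2: "2*m*Suc r = 2*m*r + 2*m" by simp
  show ?thesis unfolding x1 x2 using h1 a by linarith
qed

lemma sum_g_le: "2 \<le> (q::nat) \<Longrightarrow> r \<le> m \<Longrightarrow> (\<Sum>u\<le>r. q^(2*m*u - u*(u-1))) \<le> 2*q^(2*m*r - r*(r-1))"
proof (induction r)
  case 0 thus ?case by simp
next
  case (Suc r)
  have ih: "(\<Sum>u\<le>r. q^(2*m*u - u*(u-1))) \<le> 2*q^(2*m*r - r*(r-1))" using Suc by simp
  have "2*q^(2*m*r - r*(r-1)) \<le> q * q^(2*m*r - r*(r-1))" using Suc.prems by simp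
  also have "\<dots> = q^(2*m*r - r*(r-1) + 1)" by simp
  also have "\<dots> \<le> q^(2*m*Suc r - Suc r*(Suc r-1))"
    using Suc.prems g_step[of r m] by (intro power_increasing) auto
  finally have st: "2*q^(2*m*r - r*(r-1)) \<le> q^(2*m*Suc r - Suc r*(Suc r-1))" .
  show ?case using ih st by simp
qed

lemma bv1_eq: "ball_vol q m n 1 = 1 + gauss_binom q n 1 * (q^m - 1)"
  by (simp add: ball_vol_def gauss_binom_def alpha_def atMost_Suc lessThan_Suc)

lemma gb1_le: "gauss_binom q n 1 \<le> q^n - 1"
  unfolding gauss_binom_def alpha_def lessThan_Suc by (simp add: div_le_dividend)

lemma sq_lt: "2 \<le> (b::nat) \<Longrightarrow> 1 + (b - 1) * (b - 1) < b * b"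
proof -
  assume b: "2 \<le> b"
  define c where "c = b - 2"
  have c: "b = Suc (Suc c)" using b unfolding c_def by simp
  show ?thesis unfolding c by (simp add: algebra_simps)
qed

lemma ball_vol_lt1:
  assumes q: "2 \<le> q" and nm: "n \<le> m" and m1: "1 \<le> m"
  shows "ball_vol q m n 1 < q^(m*2)"
proof -
  have qn2: "q^n \<le> q^m" by (rule power_increasing[OF nm]) (use q in simp)
  have "q^1 \<le> q^m" by (rule power_increasing[OF m1]) (use q in simp)
  hence qm: "2 \<le> q^m" using q by simp
  have "ball_vol q m n 1 \<le> 1 + (q^n - 1) * (q^m - 1)"
    unfolding bv1_eq by (intro add_left_mono mult_le_mono gb1_le) auto
  also have "\<dots> \<le> 1 + (q^m - 1) * (q^m - 1)" using qn2 by (intro add_left_mono mult_le_mono diff_le_mono) auto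
  also have "\<dots> < q^m * q^m" by (rule sq_lt[OF qm])
  also have "\<dots> = q^(m*2)" by (simp add: power_mult power2_eq_square)
  finally show ?thesis .
qed

lemma ball_vol_lt2:
  assumes q: "2 \<le> q" and nm: "n \<le> m" and r2: "2 \<le> r" and rn: "2*r < n"
  shows "ball_vol q m n r < q^(m*(2*r))"
proof -
  have "ball_vol q m n r \<le> (\<Sum>u\<le>r. q^(2*m*u - u*(u-1)))"
    unfolding ball_vol_def
  proof (rule sum_mono)
    fix u assume "u \<in> {..r}"
    hence "u \<le> n" using rn by simp
    thus "gauss_binom q n u * alpha q m u \<le> q ^ (2 * m * u - u * (u - 1))" by (rule term_le[OF q _ nm])
  qed
  also have "\<dots> \<le> 2*q^(2*m*r - r*(r-1))" by (rule sum_g_le[OF q]) (use nm rn in simp)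
  also have "\<dots> < q * q * q^(2*m*r - r*(r-1))"
  proof (rule mult_less_mono1)
    have "2*2 \<le> q*q" using mult_le_mono[OF q q] .
    thus "2 < q*q" by simp
  qed (use q in simp)
  also have "\<dots> = q^(2*m*r - r*(r-1) + 2)" by (simp add: power_add power2_eq_square)
  also have "\<dots> \<le> q^(m*(2*r))"
  proof (rule power_increasing)
    have a: "2 \<le> r*(r-1)" using mult_le_mono[of 2 r 1 "r-1"] r2 by simp
    have b: "r*(r-1) \<le> 2*m*r"
    proof -
      have "r - 1 \<le> 2*m" using nm rn by linarith
      hence "r*(r-1) \<le> r*(2*m)" by (rule mult_le_mono2)
      thus ?thesis by (simp add: mult.commute mult.left_commute)
    qed
    have c: "m*(2*r) = 2*m*r" by simp
    show "2*m*r - r*(r-1) + 2 \<le> m*(2*r)" unfolding c using a b by linarith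
  qed (use q in simp)
  finally show ?thesis .
qed

lemma ball_vol_lt:
  assumes q: "2 \<le> q" and nm: "n \<le> m" and r1: "1 \<le> r" and rn: "2*r < n"
  shows "ball_vol q m n r < q^(m*(2*r))"
proof (cases "r = 1")
  case True
  thus ?thesis using ball_vol_lt1[OF q nm] rn nm by simp
next
  case False
  thus ?thesis using ball_vol_lt2[OF q nm _ rn] r1 by simp
qed

theorem proposition1:
  fixes K :: "'a::field set" and q m n r :: nat
  assumes "finite (UNIV :: 'a set)"
    and "subfield K" and "card K = q"
    and "card (UNIV :: 'a set) = q ^ m"
    and "3 \<le> n" and "n \<le> m"
    and "2 \<le> 2 * r" and "2 * r < n"
  shows "\<exists>S. S \<subseteq> vecs n \<and> S \<noteq> {} \<and> rank_diameter K n S = 2 * r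
             \<and> card S > ball_vol q m n r"
proof -
  note fin = assms(1) and K = assms(2) and cK = assms(3) and cU = assms(4)
  have q2: "2 \<le> q"
  proof -
    have "{0,1} \<subseteq> K" using K unfolding subfield_def by auto
    moreover have "finite K" by (rule finite_subset[OF subset_UNIV fin])
    ultimately have "card {0::'a,1} \<le> card K" by (rule card_mono[rotated])
    thus ?thesis using cK by simp
  qed
  define S where "S = {x::nat\<Rightarrow>'a. \<forall>i. 2*r \<le> i \<longrightarrow> x i = 0}"
  have Sv: "S \<subseteq> vecs n" unfolding S_def vecs_def using assms(8) by auto
  have Sne: "(\<lambda>_. 0) \<in> S" unfolding S_def by simp
  have cS: "card S = q^(m*(2*r))" unfolding S_def card_S[OF fin] cU by (simp add: power_mult)
  let ?D = "{rank_dist K n x y | x y. x \<in> S \<and> y \<in> S}"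
  have le: "\<forall>d\<in>?D. d \<le> 2*r"
  proof safe
    fix x y assume "x \<in> S" "y \<in> S"
    hence "\<forall>i. 2*r \<le> i \<longrightarrow> x i - y i = 0" unfolding S_def by simp
    thus "rank_dist K n x y \<le> 2*r" unfolding rank_dist_def by (rule rk_le[OF K])
  qed
  have "?D \<subseteq> {..2*r}"
  proof
    fix d assume "d \<in> ?D"
    hence "d \<le> 2*r" by (rule bspec[OF le])
    thus "d \<in> {..2*r}" by simp
  qed
  hence finD: "finite ?D" by (rule finite_subset) simp
  obtain e where e: "lin_indep_over K e {..<2*r}"
    using exists_indep[OF fin K cK cU q2, of "2*r"] assms(6,8) by auto
  define x where "x = (\<lambda>i. if i < 2*r then e i else (0::'a))"
  have xS: "x \<in> S" unfolding S_def x_def by simp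
  have sx: "\<And>c. (\<Sum>i\<in>{..<2*r}. c i * x i) = (\<Sum>i\<in>{..<2*r}. c i * e i)"
    by (rule sum.cong) (simp_all add: x_def)
  have xi: "lin_indep_over K x {..<2*r}"
    using e unfolding lin_indep_over_def sx .
  have "card {..<2*r} \<le> rk K n x" by (rule rk_ge[OF _ xi]) (use assms(8) in auto)
  hence ge: "2*r \<le> rank_dist K n x (\<lambda>_. 0)" unfolding rank_dist_def by simp
  have mem: "rank_dist K n x (\<lambda>_. 0) \<in> ?D"
    by (rule CollectI, rule exI[of _ x], rule exI[of _ "\<lambda>_. 0"]) (simp add: xS Sne)
  hence "rank_dist K n x (\<lambda>_. 0) \<le> 2*r" using le by (rule bspec[rotated])
  hence eq: "rank_dist K n x (\<lambda>_. 0) = 2*r" using ge by (rule le_antisym)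
  have inD: "2*r \<in> ?D" using mem unfolding eq .
  have rd: "rank_diameter K n S = 2*r" unfolding rank_diameter_def
  proof (rule Max_eqI[OF finD])
    fix d assume "d \<in> ?D"
    thus "d \<le> 2*r" by (rule bspec[OF le])
  qed (rule inD)
  have r1: "1 \<le> r" using assms(7) by simp
  have cb: "card S > ball_vol q m n r"
    unfolding cS by (rule ball_vol_lt[OF q2 assms(6) r1 assms(8)])
  have Sne': "S \<noteq> {}" using Sne by auto
  show ?thesis by (rule exI[of _ S]) (simp only: Sv Sne' rd cb simp_thms)
qed

end
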